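(* Let $G$ be a graph on $n$ vertices. Then $\mathcal{P}_2(\mathcal{E}_G)=\emptyset$ if and only if $G$ is a disjoint union of complete graphs.
   Context: Work over an algebraically closed field $k$. The Fomin–Kirillov algebra $\mathcal{E}_n$ is the graded $k$-algebra generated by degree-$1$ elements $x_{ij}$, $1\leq i<j\leq n$, subject to: $x_{ij}^2=0$; $x_{ij}x_{kl}=x_{kl}x_{ij}$ whenever $\{i,j\}\cap\{k,l\}=\emptyset$; $x_{ij}x_{jk}-x_{jk}x_{ik}-x_{ik}x_{ij}=0$ and $x_{jk}x_{ij}-x_{ik}x_{jk}-x_{ij}x_{ik}=0$ for $i<j<k$. For a graph $G$ on vertex set $\{1,\dots,n\}$, $\mathcal{E}_G$ is the subalgebra of $\mathcal{E}_n$ generated by the $x_{ij}$ with $\{i,j\}$ an edge of $G$. A degree-$2$ truncated point module over a connected graded algebra $A$ generated in degree $1$ is a graded cyclic module generated in degree $0$ with Hilbert series $1+t+t^2$; $\mathcal{P}_2(A)$ is the space of such modules. *)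

theory Defs
  imports "HOL-Computational_Algebra.Polynomial"
begin

text \<open>An element of the degree-2 part of the free algebra
  k<x_ij> is a tensor T, the coefficient of the word x_e x_f being T e f.\<close>

type_synonym gen = "nat \<times> nat"
type_synonym 'k quad = "gen \<Rightarrow> gen \<Rightarrow> 'k"

definition gens :: "nat \<Rightarrow> gen set" where
  "gens n = {(i, j). 1 \<le> i \<and> i < j \<and> j \<le> n}"

definition word2 :: "gen \<Rightarrow> gen \<Rightarrow> 'k::field quad" where
  "word2 e f = (\<lambda>a b. if a = e \<and> b = f then 1 else 0)"

definition FK_rels :: "nat \<Rightarrow> 'k::field quad set" where
  "FK_rels n =
     {word2 (i, j) (i, j) | i j. (i, j) \<in> gens n}
   \<union> {(\<lambda>a b. word2 (i, j) (k, l) a b - word2 (k, l) (i, j) a b) | i j k l.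
        (i, j) \<in> gens n \<and> (k, l) \<in> gens n \<and> {i, j} \<inter> {k, l} = {}}
   \<union> {(\<lambda>a b. word2 (i, j) (j, k) a b - word2 (j, k) (i, k) a b - word2 (i, k) (i, j) a b) | i j k.
        1 \<le> i \<and> i < j \<and> j < k \<and> k \<le> n}
   \<union> {(\<lambda>a b. word2 (j, k) (i, j) a b - word2 (i, k) (j, k) a b - word2 (i, j) (i, k) a b) | i j k.
        1 \<le> i \<and> i < j \<and> j < k \<and> k \<le> n}"

definition lin_span :: "'k::field quad set \<Rightarrow> 'k quad set" where
  "lin_span S = {T. \<exists>F u. finite F \<and> F \<subseteq> S \<and> T = (\<lambda>a b. \<Sum>g\<in>F. u g * g a b)}"

text \<open>Degree-2 relations of E_G: elements of the degree-2 part of the free algebra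
  on the generators x_e, e an edge of G, that vanish in E_n.  Since E_n is
  quadratic, these are exactly the elements of span(FK_rels n) supported on
  words in the edge generators.\<close>
definition EG_rels2 :: "nat \<Rightarrow> gen set \<Rightarrow> 'k::field quad set" where
  "EG_rels2 n E = {T \<in> lin_span (FK_rels n). \<forall>e f. T e f \<noteq> 0 \<longrightarrow> e \<in> E \<and> f \<in> E}"

text \<open>Degree-2 truncated point modules over E_G.  Such a module is
  M = M_0 + M_1 + M_2 with each M_i one-dimensional; identifying each M_i with k,
  generator x_e acts M_0 \<rightarrow> M_1 by the scalar (a e) and M_1 \<rightarrow> M_2 by (b e)
  (and kills M_2).  Cyclic generation in degree 0 means A_1 M_0 = M_1 and
  A_1 M_1 = M_2, and the action of the free algebra must factor through E_G,
  i.e. every degree-2 relation of E_G acts as zero on M_0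
  (x_e x_f m_0 = b e * a f m_2).  Relations in degree \<ge> 3 act trivially because
  M_3 = 0, and E_G has no relations in degrees \<le> 1.\<close>
definition P2 :: "nat \<Rightarrow> gen set \<Rightarrow> ((gen \<Rightarrow> 'k::field) \<times> (gen \<Rightarrow> 'k)) set" where
  "P2 n E = {(a, b).
      (\<forall>e. e \<notin> E \<longrightarrow> a e = 0 \<and> b e = 0) \<and>
      (\<exists>e\<in>E. a e \<noteq> 0) \<and> (\<exists>e\<in>E. b e \<noteq> 0) \<and>
      (\<forall>T \<in> EG_rels2 n E. (\<Sum>e\<in>E. \<Sum>f\<in>E. T e f * (b e * a f)) = 0)}"

text \<open>A graph on {1..n} with edge set E (edges {i,j} stored as (i,j), i<j) is a
  disjoint union of complete graphs: there is a partition of the vertex set such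
  that two distinct vertices are adjacent iff they lie in the same block.\<close>
definition disjoint_union_of_complete :: "nat \<Rightarrow> gen set \<Rightarrow> bool" where
  "disjoint_union_of_complete n E \<longleftrightarrow>
     (\<exists>P. (\<Union>P = {1..n}) \<and> (\<forall>B\<in>P. B \<noteq> {}) \<and>
          (\<forall>B\<in>P. \<forall>C\<in>P. B \<noteq> C \<longrightarrow> B \<inter> C = {}) \<and>
          (\<forall>i j. (i, j) \<in> E \<longleftrightarrow> (i, j) \<in> gens n \<and> (\<exists>B\<in>P. i \<in> B \<and> j \<in> B)))"

end

theory Submission
  imports Defs
begin

lemma fin_E: "E \<subseteq> gens n \<Longrightarrow> finite E"
  by (rule finite_subset[of _ "{1..n} \<times> {1..n}"]) (auto simp: gens_def)

lemma eval_word2: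
  fixes a b :: "gen \<Rightarrow> 'k::field"
  assumes "finite E" "e \<in> E" "f \<in> E"
  shows "(\<Sum>x\<in>E. \<Sum>y\<in>E. word2 e f x y * (b x * a y)) = b e * a f"
proof -
  have "(\<Sum>x\<in>E. \<Sum>y\<in>E. word2 e f x y * (b x * a y)) =
        (\<Sum>x\<in>E. if x = e then (\<Sum>y\<in>E. if y = f then b x * a y else 0) else 0)"
    by (rule sum.cong) (auto simp: word2_def intro!: sum.cong)
  also have "\<dots> = b e * a f" using assms by simp
  finally show ?thesis .
qed

lemma rel_in:
  assumes "g \<in> FK_rels n" "\<forall>x y. g x y \<noteq> 0 \<longrightarrow> x \<in> E \<and> y \<in> E"
  shows "g \<in> EG_rels2 n E"
  unfolding EG_rels2_def lin_span_def
  using assms by (auto intro!: exI[of _ "{g}"] exI[of _ "\<lambda>_. 1"])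

lemma span_functional:
  assumes "\<forall>g\<in>S. g w1 w2 + g u1 u2 = (0::'k::field)" "T \<in> lin_span S"
  shows "T w1 w2 + T u1 u2 = 0"
proof -
  obtain F u where F: "finite F" "F \<subseteq> S" "T = (\<lambda>a b. \<Sum>g\<in>F. u g * g a b)"
    using assms(2) unfolding lin_span_def by blast
  have "T w1 w2 + T u1 u2 = (\<Sum>g\<in>F. u g * (g w1 w2 + g u1 u2))"
    by (simp add: F(3) sum.distrib[symmetric] distrib_left)
  also have "\<dots> = 0" using assms(1) F(2) by (intro sum.neutral) auto
  finally show ?thesis .
qed

lemma L1: assumes "g \<in> FK_rels n" "p < q" "q < r"
  shows "g (p,q) (q,r) + g (q,r) (p,r) = (0::'k::field)"
  using assms unfolding FK_rels_def by (auto simp: word2_def)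

lemma L2: assumes "g \<in> FK_rels n" "p < q" "q < r"
  shows "g (p,r) (p,q) + g (p,q) (q,r) = (0::'k::field)"
  using assms unfolding FK_rels_def by (auto simp: word2_def)

lemma L3: assumes "g \<in> FK_rels n" "p < q" "q < r"
  shows "g (q,r) (p,r) + g (p,q) (q,r) = (0::'k::field)"
  using assms unfolding FK_rels_def by (auto simp: word2_def)

lemma eval_ind:
  fixes T :: "'k::field quad"
  assumes "finite E" "e \<in> E" "f \<in> E"
  shows "(\<Sum>x\<in>E. \<Sum>y\<in>E. T x y * ((if x = e then 1 else 0) * (if y = f then 1 else 0))) = T e f"
proof -
  have "(\<Sum>x\<in>E. \<Sum>y\<in>E. T x y * ((if x = e then 1 else 0) * (if y = f then 1 else 0))) =
        (\<Sum>x\<in>E. if x = e then (\<Sum>y\<in>E. if y = f then T x y else 0) else 0)"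
    by (rule sum.cong) (auto intro!: sum.cong)
  also have "\<dots> = T e f" using assms by simp
  finally show ?thesis .
qed

lemma case_gen:
  fixes a b :: "gen \<Rightarrow> 'k::field"
  assumes E: "E \<subseteq> gens n" and e: "e \<in> E" "f \<in> E"
    and L: "\<And>g. g \<in> FK_rels n \<Longrightarrow> g f e + g u1 u2 = (0::'k)" and u: "u1 \<notin> E \<or> u2 \<notin> E"
  shows "((\<lambda>x. if x = e then 1 else 0), (\<lambda>x. if x = f then 1 else 0)) \<in> (P2 n E :: ((gen \<Rightarrow> 'k) \<times> (gen \<Rightarrow> 'k)) set)"
proof -
  have fin: "finite E" using fin_E[OF E] .
  { fix T :: "'k quad" assume T: "T \<in> EG_rels2 n E"
    have "T f e + T u1 u2 = 0"
      using T L unfolding EG_rels2_def by (intro span_functional[of "FK_rels n"]) auto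
    moreover have "T u1 u2 = 0" using T u unfolding EG_rels2_def by blast
    ultimately have "T f e = 0" by simp
    hence "(\<Sum>x\<in>E. \<Sum>y\<in>E. T x y * ((if x = f then 1 else 0) * (if y = e then 1 else 0))) = 0"
      using eval_ind[OF fin e(2) e(1), of T] by simp }
  then show ?thesis unfolding P2_def using e by auto
qed

lemma tri:
  fixes A1 A2 A3 B1 B2 B3 :: "'k::field"
  assumes "B1*A1=0" "B2*A2=0" "B3*A3=0" "B1*A2 - B2*A3 - B3*A1 = 0" "B2*A1 - B3*A2 - B1*A3 = 0"
  shows "(A1=0 \<and> A2=0 \<and> A3=0) \<or> (B1=0 \<and> B2=0 \<and> B3=0)"
proof (cases "A1 = 0")
  case False
  then have "B1 = 0" using assms(1) by simp
  then show ?thesis using assms False by (cases "A2 = 0") auto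
next
  case a1: True
  show ?thesis
  proof (cases "A2 = 0")
    case False
    then show ?thesis using assms a1 by auto
  next
    case True
    then show ?thesis using assms a1 by auto
  qed
qed

definition adj :: "gen set \<Rightarrow> nat \<Rightarrow> nat \<Rightarrow> bool" where
  "adj E x y \<longleftrightarrow> x = y \<or> (x, y) \<in> E \<or> (y, x) \<in> E"

lemma trans_DUC:
  assumes E: "E \<subseteq> gens n"
    and tr: "\<And>x y z. x \<in> {1..n} \<Longrightarrow> y \<in> {1..n} \<Longrightarrow> z \<in> {1..n} \<Longrightarrow> adj E x y \<Longrightarrow> adj E y z \<Longrightarrow> adj E x z"
  shows "disjoint_union_of_complete n E"
proof -
  define cl where "cl x = {y \<in> {1..n}. adj E x y}" for x
  define P where "P = cl ` {1..n}"
  have sym: "adj E x y \<Longrightarrow> adj E y x" for x y by (auto simp: adj_def)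
  have "\<Union>P = {1..n}" unfolding P_def cl_def by (auto simp: adj_def)
  moreover have "\<forall>B\<in>P. B \<noteq> {}" unfolding P_def cl_def by (auto simp: adj_def)
  moreover have "\<forall>B\<in>P. \<forall>C\<in>P. B \<noteq> C \<longrightarrow> B \<inter> C = {}"
  proof (intro ballI impI)
    fix B C assume "B \<in> P" "C \<in> P" "B \<noteq> C"
    then obtain x y where xy: "x \<in> {1..n}" "y \<in> {1..n}" "B = cl x" "C = cl y" using \<open>B \<in> P\<close> \<open>C \<in> P\<close> unfolding P_def by blast
    show "B \<inter> C = {}"
    proof (rule ccontr)
      assume "B \<inter> C \<noteq> {}"
      then obtain z where z: "z \<in> {1..n}" "adj E x z" "adj E y z" using xy unfolding cl_def by auto
      have "adj E x y" using tr[OF xy(1) z(1) xy(2) z(2) sym[OF z(3)]] .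
      then have "cl x = cl y" unfolding cl_def using tr sym xy by blast
      then show False using xy \<open>B \<noteq> C\<close> by simp
    qed
  qed
  moreover have "\<forall>i j. (i, j) \<in> E \<longleftrightarrow> (i, j) \<in> gens n \<and> (\<exists>B\<in>P. i \<in> B \<and> j \<in> B)"
  proof (intro allI iffI)
    fix i j assume ij: "(i, j) \<in> E"
    then have g: "(i, j) \<in> gens n" using E by auto
    then have "i \<in> cl i" "j \<in> cl i" "i \<in> {1..n}" using ij unfolding cl_def gens_def by (auto simp: adj_def)
    then show "(i, j) \<in> gens n \<and> (\<exists>B\<in>P. i \<in> B \<and> j \<in> B)" using g unfolding P_def by auto
  next
    fix i j assume h: "(i, j) \<in> gens n \<and> (\<exists>B\<in>P. i \<in> B \<and> j \<in> B)"
    then obtain x where x: "x \<in> {1..n}" "i \<in> cl x" "j \<in> cl x" unfolding P_def by auto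
    then have "adj E i j" using tr sym unfolding cl_def by blast
    moreover have "i < j" using h by (auto simp: gens_def)
    moreover have "(j, i) \<notin> E" using E \<open>i < j\<close> by (auto simp: gens_def)
    ultimately show "(i, j) \<in> E" by (auto simp: adj_def)
  qed
  ultimately show ?thesis unfolding disjoint_union_of_complete_def by blast
qed

lemma path_ne_lt:
  assumes E: "E \<subseteq> gens n" and xz: "x < z"
    and a1: "adj E x y" and a2: "adj E y z" and a3: "\<not> adj E x z"
  shows "(P2 n E :: ((gen \<Rightarrow> 'k::field) \<times> (gen \<Rightarrow> 'k)) set) \<noteq> {}"
proof -
  have ne: "x \<noteq> y" "y \<noteq> z" using a1 a2 a3 by (auto simp: adj_def)
  have nE: "(a, b) \<in> E \<Longrightarrow> a < b" for a b using E by (auto simp: gens_def)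
  have xzE: "(x, z) \<notin> E" using a3 by (auto simp: adj_def)
  consider "x < y" "y < z" | "y < x" | "z < y" using ne xz by linarith
  then show ?thesis
  proof cases
    case 1
    have "(x,y) \<in> E" "(y,z) \<in> E" using a1 a2 1 nE unfolding adj_def by (auto dest: nE)
    from case_gen[OF E this(2) this(1), of "(y,z)" "(x,z)"] L1[of _ n x y z] 1 xzE
    show ?thesis by blast
  next
    case 2
    have "(y,x) \<in> E" "(y,z) \<in> E" using a1 a2 2 xz unfolding adj_def by (auto dest: nE)
    from case_gen[OF E this(1) this(2), of "(y,x)" "(x,z)"] L2[of _ n y x z] 2 xz xzE
    show ?thesis by blast
  next
    case 3
    have "(x,y) \<in> E" "(z,y) \<in> E" using a1 a2 3 xz unfolding adj_def by (auto dest: nE)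
    from case_gen[OF E this(1) this(2), of "(x,z)" "(z,y)"] L3[of _ n x z y] 3 xz xzE
    show ?thesis by blast
  qed
qed

lemma path_ne:
  assumes E: "E \<subseteq> gens n"
    and a1: "adj E x y" and a2: "adj E y z" and a3: "\<not> adj E x z"
  shows "(P2 n E :: ((gen \<Rightarrow> 'k::field) \<times> (gen \<Rightarrow> 'k)) set) \<noteq> {}"
proof -
  have "x \<noteq> z" using a3 by (auto simp: adj_def)
  then consider "x < z" | "z < x" by linarith
  then show ?thesis
  proof cases
    case 1 then show ?thesis using path_ne_lt[OF E 1 a1 a2 a3] by blast
  next
    case 2
    have "adj E z y" "adj E y x" "\<not> adj E z x" using a1 a2 a3 by (auto simp: adj_def)
    then show ?thesis using path_ne_lt[OF E 2] by blast
  qed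
qed

lemma P2_rel:
  assumes "(a, b) \<in> P2 n E" "g \<in> FK_rels n" "\<forall>x y. g x y \<noteq> 0 \<longrightarrow> x \<in> E \<and> y \<in> E"
  shows "(\<Sum>e\<in>E. \<Sum>f\<in>E. g e f * (b e * a f)) = 0"
  using assms rel_in[OF assms(2,3)] unfolding P2_def by auto

lemma P2_facts:
  fixes a b :: "gen \<Rightarrow> 'k::field"
  assumes E: "E \<subseteq> gens n" and P: "(a, b) \<in> P2 n E"
  shows sq: "\<And>x. x \<in> E \<Longrightarrow> b x * a x = 0"
    and comm: "\<And>i j k l. (i,j) \<in> E \<Longrightarrow> (k,l) \<in> E \<Longrightarrow> {i,j} \<inter> {k,l} = {} \<Longrightarrow>
                 b (i,j) * a (k,l) - b (k,l) * a (i,j) = 0"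
    and tri1: "\<And>p q r. p < q \<Longrightarrow> q < r \<Longrightarrow> (p,q) \<in> E \<Longrightarrow> (q,r) \<in> E \<Longrightarrow> (p,r) \<in> E \<Longrightarrow>
                 b (p,q) * a (q,r) - b (q,r) * a (p,r) - b (p,r) * a (p,q) = 0"
    and tri2: "\<And>p q r. p < q \<Longrightarrow> q < r \<Longrightarrow> (p,q) \<in> E \<Longrightarrow> (q,r) \<in> E \<Longrightarrow> (p,r) \<in> E \<Longrightarrow>
                 b (q,r) * a (p,q) - b (p,r) * a (q,r) - b (p,q) * a (p,r) = 0"
proof -
  have fin: "finite E" using fin_E[OF E] .
  have ev: "\<And>e f. e \<in> E \<Longrightarrow> f \<in> E \<Longrightarrow> (\<Sum>x\<in>E. \<Sum>y\<in>E. word2 e f x y * (b x * a y)) = b e * a f"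
    using eval_word2[OF fin] by blast
  have w0: "word2 e f x y \<noteq> (0::'k) \<Longrightarrow> x = e \<and> y = f" for e f x y by (simp add: word2_def split: if_splits)
  show "b x * a x = 0" if "x \<in> E" for x
  proof -
    obtain i j where x: "x = (i,j)" by (cases x)
    have g: "(word2 x x :: 'k quad) \<in> FK_rels n" using that E x unfolding FK_rels_def by blast
    have "(\<Sum>e\<in>E. \<Sum>f\<in>E. word2 x x e f * (b e * a f)) = 0"
      by (rule P2_rel[OF P g]) (use that w0 in blast)
    then show ?thesis using ev[OF that that] by simp
  qed
  show "b (i,j) * a (k,l) - b (k,l) * a (i,j) = 0" if h: "(i,j) \<in> E" "(k,l) \<in> E" "{i,j} \<inter> {k,l} = {}" for i j k l
  proof -
    let ?g = "(\<lambda>x y. word2 (i,j) (k,l) x y - word2 (k,l) (i,j) x y) :: 'k quad"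
    have g: "?g \<in> FK_rels n" using h E unfolding FK_rels_def by blast
    have "(\<Sum>e\<in>E. \<Sum>f\<in>E. ?g e f * (b e * a f)) = 0"
      by (rule P2_rel[OF P g]) (use h in \<open>auto simp: word2_def\<close>)
    then show ?thesis using ev[OF h(1) h(2)] ev[OF h(2) h(1)]
      by (simp add: left_diff_distrib sum_subtractf)
  qed
  show "b (p,q) * a (q,r) - b (q,r) * a (p,r) - b (p,r) * a (p,q) = 0"
    if h: "p < q" "q < r" "(p,q) \<in> E" "(q,r) \<in> E" "(p,r) \<in> E" for p q r
  proof -
    let ?g = "(\<lambda>x y. word2 (p,q) (q,r) x y - word2 (q,r) (p,r) x y - word2 (p,r) (p,q) x y) :: 'k quad"
    have "1 \<le> p" "r \<le> n" using h E by (auto simp: gens_def)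
    then have g: "?g \<in> FK_rels n" using h unfolding FK_rels_def by blast
    have "(\<Sum>e\<in>E. \<Sum>f\<in>E. ?g e f * (b e * a f)) = 0"
      by (rule P2_rel[OF P g]) (use h in \<open>auto simp: word2_def\<close>)
    then show ?thesis using ev[OF h(3) h(4)] ev[OF h(4) h(5)] ev[OF h(5) h(3)]
      by (simp add: left_diff_distrib sum_subtractf)
  qed
  show "b (q,r) * a (p,q) - b (p,r) * a (q,r) - b (p,q) * a (p,r) = 0"
    if h: "p < q" "q < r" "(p,q) \<in> E" "(q,r) \<in> E" "(p,r) \<in> E" for p q r
  proof -
    let ?g = "(\<lambda>x y. word2 (q,r) (p,q) x y - word2 (p,r) (q,r) x y - word2 (p,q) (p,r) x y) :: 'k quad"
    have "1 \<le> p" "r \<le> n" using h E by (auto simp: gens_def)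
    then have g: "?g \<in> FK_rels n" using h unfolding FK_rels_def by blast
    have "(\<Sum>e\<in>E. \<Sum>f\<in>E. ?g e f * (b e * a f)) = 0"
      by (rule P2_rel[OF P g]) (use h in \<open>auto simp: word2_def\<close>)
    then show ?thesis using ev[OF h(4) h(3)] ev[OF h(5) h(4)] ev[OF h(3) h(5)]
      by (simp add: left_diff_distrib sum_subtractf)
  qed
qed

lemma tri_exists:
  fixes i j k l :: nat
  assumes "i < j" "k < l" "(i,j) \<noteq> (k,l)" "{i,j} \<inter> {k,l} \<noteq> {}"
  shows "\<exists>p q r. p < q \<and> q < r \<and> {p,q,r} \<subseteq> {i,j,k,l} \<and>
     (i,j) \<in> {(p,q),(q,r),(p,r)} \<and> (k,l) \<in> {(p,q),(q,r),(p,r)}"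
proof -
  consider "i = k" "j < l" | "i = k" "l < j" | "i = l" | "j = k" | "j = l" "i < k" | "j = l" "k < i"
    using assms by fastforce
  then show ?thesis
  proof cases
    case 1 then show ?thesis using assms by (intro exI[of _ i] exI[of _ j] exI[of _ l]) auto
  next
    case 2 then show ?thesis using assms by (intro exI[of _ i] exI[of _ l] exI[of _ j]) auto
  next
    case 3 then show ?thesis using assms by (intro exI[of _ k] exI[of _ i] exI[of _ j]) auto
  next
    case 4 then show ?thesis using assms by (intro exI[of _ i] exI[of _ j] exI[of _ l]) auto
  next
    case 5 then show ?thesis using assms by (intro exI[of _ i] exI[of _ k] exI[of _ j]) auto
  next
    case 6 then show ?thesis using assms by (intro exI[of _ k] exI[of _ i] exI[of _ j]) auto
  qed
qed

lemma DUC_empty: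
  assumes E: "E \<subseteq> gens n" and D: "disjoint_union_of_complete n E"
  shows "(P2 n E :: ((gen \<Rightarrow> 'k::field) \<times> (gen \<Rightarrow> 'k)) set) = {}"
proof (rule ccontr)
  assume "(P2 n E :: ((gen \<Rightarrow> 'k::field) \<times> (gen \<Rightarrow> 'k)) set) \<noteq> {}"
  then obtain a b :: "gen \<Rightarrow> 'k" where P: "(a, b) \<in> P2 n E" by auto
  have "(\<exists>e\<in>E. a e \<noteq> 0) \<and> (\<exists>e\<in>E. b e \<noteq> 0)" using P unfolding P2_def by simp
  then obtain e f where ef: "e \<in> E" "a e \<noteq> 0" "f \<in> E" "b f \<noteq> 0" by blast
  obtain i j k l where ij: "e = (i,j)" "f = (k,l)" by (cases e, cases f) auto
  have be: "b e = 0" using sq[OF E P ef(1)] ef(2) by simp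
  have lt: "i < j" "k < l" using ef E ij by (auto simp: gens_def)
  show False
  proof (cases "{i,j} \<inter> {k,l} = {}")
    case True
    have "b (k,l) * a (i,j) - b (i,j) * a (k,l) = 0"
      using comm[OF E P, of k l i j] ef ij True by auto
    then show False using be ef ij by simp
  next
    case False
    have nef: "(i,j) \<noteq> (k,l)" using be ef ij by auto
    obtain p q r where pqr: "p < q" "q < r" "{p,q,r} \<subseteq> {i,j,k,l}"
      "(i,j) \<in> {(p,q),(q,r),(p,r)}" "(k,l) \<in> {(p,q),(q,r),(p,r)}"
      using tri_exists[OF lt nef False] by blast
    obtain P where PP: "\<Union>P = {1..n}" "\<forall>B\<in>P. \<forall>C\<in>P. B \<noteq> C \<longrightarrow> B \<inter> C = {}"
      "\<forall>i j. (i, j) \<in> E \<longleftrightarrow> (i, j) \<in> gens n \<and> (\<exists>B\<in>P. i \<in> B \<and> j \<in> B)"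
      using D unfolding disjoint_union_of_complete_def by (elim exE conjE) (intro that)
    obtain B1 where B1: "B1 \<in> P" "i \<in> B1" "j \<in> B1" using spec[OF spec[OF PP(3)], of i j] ef ij by auto
    obtain B2 where B2: "B2 \<in> P" "k \<in> B2" "l \<in> B2" using spec[OF spec[OF PP(3)], of k l] ef ij by auto
    have "B1 \<inter> B2 \<noteq> {}" using False B1 B2 by auto
    then have "B1 = B2" using PP(2) B1 B2 by blast
    then have inB: "{p,q,r} \<subseteq> B1" using pqr(3) B1 B2 by auto
    have Bsub: "B1 \<subseteq> {1..n}" using PP(1) B1 by auto
    have inE: "(x,y) \<in> E" if "x \<in> {p,q,r}" "y \<in> {p,q,r}" "x < y" for x y
    proof -
      have "(x,y) \<in> gens n" using that inB Bsub by (auto simp: gens_def)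
      then show ?thesis using spec[OF spec[OF PP(3)], of x y] B1 inB that by blast
    qed
    have E3: "(p,q) \<in> E" "(q,r) \<in> E" "(p,r) \<in> E" using inE pqr by auto
    have "(a (p,q) = 0 \<and> a (q,r) = 0 \<and> a (p,r) = 0) \<or> (b (p,q) = 0 \<and> b (q,r) = 0 \<and> b (p,r) = 0)"
      by (rule tri[OF sq[OF E P E3(1)] sq[OF E P E3(2)] sq[OF E P E3(3)] tri1[OF E P pqr(1,2) E3] tri2[OF E P pqr(1,2) E3]])
    then show False using ef ij pqr(4,5) by auto
  qed
qed

theorem corollary3p1:
  fixes n :: nat and E :: "(nat \<times> nat) set"
  assumes "E \<subseteq> gens n"
  shows "(P2 n E :: ((nat \<times> nat \<Rightarrow> 'k::alg_closed_field) \<times> (nat \<times> nat \<Rightarrow> 'k)) set) = {}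
         \<longleftrightarrow> disjoint_union_of_complete n E"
proof
  assume h: "(P2 n E :: ((nat \<times> nat \<Rightarrow> 'k::alg_closed_field) \<times> (nat \<times> nat \<Rightarrow> 'k)) set) = {}"
  show "disjoint_union_of_complete n E"
  proof (rule trans_DUC[OF assms])
    fix x y z assume "adj E x y" "adj E y z"
    then show "adj E x z" using path_ne[OF assms, of x y z] h by blast
  qed
next
  assume "disjoint_union_of_complete n E"
  then show "(P2 n E :: ((nat \<times> nat \<Rightarrow> 'k::alg_closed_field) \<times> (nat \<times> nat \<Rightarrow> 'k)) set) = {}"
    using DUC_empty[OF assms] by blast
qed

end
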